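(* Let $a:\mathbb{R}^d\to[0,\infty)$ satisfy $a(y)=a(-y)$, $\int_{\mathbb{R}^d}a=1$, $\widehat a\in L^1(\mathbb{R}^d)$, $|a(y)|<Ce^{-\delta|y|}$ for some $C<\infty$, $\delta>0$, and suppose there are $\varepsilon_0<\delta$ and $C'<\infty$ with $\|\widehat a(\cdot+i\tau)\|_{L^1(\mathbb{R}^d)}\le C'$ for all $|\tau|\le\varepsilon_0$. Let $p(t,x)$ be the transition density of the random walk with generator $\mathcal L\psi(x)=\int(\psi(x+y)-\psi(x))a(y)dy$, i.e. for $t>0$, $x\ne0$, $p(t,x)=\frac{e^{-t}}{(2\pi)^d}\int_{\mathbb{R}^d}e^{i(k,x)}(e^{t\widehat a(k)}-1)\,dk$. Then there exist constants $\alpha<\infty$ and $C''<\infty$ such that \[p(t,x)\le C''te^{\alpha\varepsilon^2t-\varepsilon|x|},\qquad x\ne0,\ t>0,\] for all sufficiently small $\varepsilon\ge0$.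
   Context: $\widehat a(z)=\int e^{-i(z,y)}a(y)\,dy$, analytic in $|\mathrm{Im}\,z|<\delta$. *)

theory Defs
  imports "HOL-Analysis.Analysis"
begin

text \<open>Complexified Fourier transform of a kernel a on R^d, evaluated at z = k + i tau:
  hat a (k + i tau) = int exp(-i (k + i tau, y)) a(y) dy = int exp((tau,y) - i (k,y)) a(y) dy.\<close>
definition fourier_hat :: "('a::euclidean_space \<Rightarrow> real) \<Rightarrow> 'a \<Rightarrow> 'a \<Rightarrow> complex" where
  "fourier_hat a k \<tau> =
     (LINT y|lborel. exp (complex_of_real (\<tau> \<bullet> y) - \<i> * complex_of_real (k \<bullet> y)) * complex_of_real (a y))"

text \<open>The integral is real by the symmetry of a; we take its real part.\<close>
definition trans_density :: "('a::euclidean_space \<Rightarrow> real) \<Rightarrow> real \<Rightarrow> 'a \<Rightarrow> real" where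
  "trans_density a t x =
     Re (complex_of_real (exp (- t) / (2 * pi) ^ DIM('a)) *
         (LINT k|lborel. exp (\<i> * complex_of_real (k \<bullet> x)) *
                         (exp (complex_of_real t * fourier_hat a k 0) - 1)))"

end

theory Submission
  imports Defs "HOL-Probability.Probability"
begin

interpretation lborel_prod_sf: product_sigma_finite "\<lambda>_::'i. (lborel :: real measure)"
  by unfold_locales

lemma lborel_prod_basis:
  fixes f :: "'a::euclidean_space \<Rightarrow> real \<Rightarrow> 'b::{real_normed_field,banach,second_countable_topology}"
  assumes int: "\<And>b. b \<in> Basis \<Longrightarrow> integrable lborel (f b)"
  shows "integrable (lborel::'a measure) (\<lambda>x. \<Prod>b\<in>Basis. f b (x \<bullet> b))"
    and "(\<integral>x. (\<Prod>b\<in>Basis. f b (x \<bullet> b)) \<partial>(lborel::'a measure)) = (\<Prod>b\<in>Basis. integral\<^sup>L lborel (f b))"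
proof -
  have meas[measurable]: "(\<lambda>g. \<Sum>b\<in>Basis. g b *\<^sub>R b) \<in> (\<Pi>\<^sub>M b\<in>(Basis::'a set). lborel) \<rightarrow>\<^sub>M (borel::'a measure)"
    by simp
  have fm[measurable]: "\<And>b. b \<in> Basis \<Longrightarrow> f b \<in> borel_measurable borel"
    using borel_measurable_integrable[OF int] by simp
  have fm2: "(\<lambda>x. \<Prod>b\<in>Basis. f b (x \<bullet> b)) \<in> borel_measurable (borel::'a measure)"
    by (intro borel_measurable_prod) (auto intro: measurable_compose[OF _ fm] )
  have eq: "\<And>g. g \<in> space (\<Pi>\<^sub>M b\<in>(Basis::'a set). lborel) \<Longrightarrow>
      (\<Prod>b\<in>Basis. f b ((\<Sum>c\<in>Basis. g c *\<^sub>R c) \<bullet> b)) = (\<Prod>b\<in>Basis. f b (g b))"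
    by (intro prod.cong refl) (simp add: inner_sum_left inner_Basis if_distrib cong: if_cong)
  have pint: "integrable (\<Pi>\<^sub>M b\<in>(Basis::'a set). lborel) (\<lambda>g. \<Prod>b\<in>Basis. f b (g b))"
    by (intro lborel_prod_sf.product_integrable_prod int) auto
  show "integrable (lborel::'a measure) (\<lambda>x. \<Prod>b\<in>Basis. f b (x \<bullet> b))"
    apply (subst lborel_eq)
    apply (subst integrable_distr_eq)
      apply (rule meas)
     apply (simp add: fm2)
    using pint by (subst Bochner_Integration.integrable_cong[OF refl eq]) auto
  show "(\<integral>x. (\<Prod>b\<in>Basis. f b (x \<bullet> b)) \<partial>(lborel::'a measure)) = (\<Prod>b\<in>Basis. integral\<^sup>L lborel (f b))"
    apply (subst lborel_eq)
    apply (subst integral_distr)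
      apply (rule meas)
     apply (simp add: fm2)
    apply (subst Bochner_Integration.integral_cong[OF refl eq], assumption)
    by (intro lborel_prod_sf.product_integral_prod int) auto
qed


lemma nn_integral_eucl_affine:
  fixes f :: "'a::euclidean_space \<Rightarrow> ennreal" and c :: real
  assumes [measurable]: "f \<in> borel_measurable borel" and c: "c \<noteq> 0"
  shows "(\<integral>\<^sup>+x. f x \<partial>lborel) = \<bar>c\<bar>^DIM('a) * (\<integral>\<^sup>+x. f (t + c *\<^sub>R x) \<partial>lborel)"
  by (subst lborel_affine[OF c, of t])
     (simp add: nn_integral_density nn_integral_distr nn_integral_cmult)

lemma integrable_eucl_affine:
  fixes f :: "'a::euclidean_space \<Rightarrow> 'b :: {banach, second_countable_topology}"
  assumes f: "integrable lborel f" and c: "c \<noteq> 0"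
  shows "integrable lborel (\<lambda>x. f (t + c *\<^sub>R x))"
  using f f[THEN borel_measurable_integrable] unfolding integrable_iff_bounded
  by (subst (asm) nn_integral_eucl_affine[where c=c and t=t]) (auto simp: ennreal_mult_less_top c)

lemma integral_eucl_reflect:
  fixes f :: "'a::euclidean_space \<Rightarrow> 'b :: {banach, second_countable_topology}"
  shows "(\<integral>x. f (t - x) \<partial>lborel) = (\<integral>x. f x \<partial>lborel)"
proof cases
  assume f[measurable]: "integrable lborel f"
  have i2: "integrable lborel (\<lambda>x. f (t + (-1) *\<^sub>R x))"
    using integrable_eucl_affine[OF f, of "-1" t] by simp
  show ?thesis
    using f f[THEN borel_measurable_integrable] i2
    by (subst (2) lborel_affine[of "-1" t])
       (simp_all add: density_1 integral_distr)
next
  assume nf: "\<not> integrable lborel f"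
  have "\<not> integrable lborel (\<lambda>x. f (t - x))"
  proof
    assume "integrable lborel (\<lambda>x. f (t - x))"
    from integrable_eucl_affine[OF this, of "-1" t] have "integrable lborel f" by simp
    with nf show False by simp
  qed
  with nf show ?thesis by (simp add: not_integrable_integral_eq)
qed

lemma integrable_eucl_reflect:
  fixes f :: "'a::euclidean_space \<Rightarrow> 'b :: {banach, second_countable_topology}"
  assumes "integrable lborel f"
  shows "integrable lborel (\<lambda>x. f (t - x))"
  using integrable_eucl_affine[OF assms, of "-1" t] by simp


lemma integrable_exponential_density:
  assumes c: "0 < (c::real)"
  shows "integrable lborel (exponential_density c)"
proof -
  interpret p: prob_space "density lborel (exponential_density c)"
    by (rule prob_space_exponential_density[OF c])
  have "emeasure (density lborel (exponential_density c)) UNIV = 1"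
    using p.emeasure_space_1 by simp
  then have "(\<integral>\<^sup>+x. ennreal (exponential_density c x) \<partial>lborel) = 1"
    by (simp add: emeasure_density)
  then show ?thesis
    unfolding integrable_iff_bounded using c
    by (simp add: exponential_density_nonneg)
qed

lemma integrable_exp_neg_abs:
  assumes c: "0 < (c::real)"
  shows "integrable lborel (\<lambda>s. exp (- c * \<bar>s\<bar>))"
proof -
  have i1: "integrable lborel (exponential_density c)" by (rule integrable_exponential_density[OF c])
  have i2: "integrable lborel (\<lambda>s. exponential_density c (0 + (-1) * s))"
    by (rule lborel_integrable_real_affine[OF i1]) simp
  have i3: "integrable lborel (\<lambda>s. (exponential_density c s + exponential_density c (0 + (-1) * s)) / c)"
    using i1 i2 by auto
  show ?thesis
  proof (rule Bochner_Integration.integrable_bound[OF i3])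
    show "(\<lambda>s. exp (- c * \<bar>s\<bar>)) \<in> borel_measurable lborel" by measurable
    show "AE x in lborel. norm (exp (- c * \<bar>x\<bar>)) \<le> norm ((exponential_density c x + exponential_density c (0 + - 1 * x)) / c)"
    proof (rule AE_I2)
      fix x :: real
      have ge: "0 \<le> exponential_density c x" "0 \<le> exponential_density c (0 + -1 * x)"
        using c by (auto simp: exponential_density_def)
      have "exp (- c * \<bar>x\<bar>) \<le> (exponential_density c x + exponential_density c (0 + - 1 * x)) / c"
        using c by (auto simp: exponential_density_def field_simps abs_if)
      then show "norm (exp (- c * \<bar>x\<bar>)) \<le> norm ((exponential_density c x + exponential_density c (0 + - 1 * x)) / c)"
        using ge c by simp
    qed
  qed
qed

lemma gauss_ft_1d:
  fixes \<sigma> u :: real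
  assumes s: "0 < \<sigma>"
  shows "integrable lborel (\<lambda>k. complex_of_real (exp (- ((\<sigma> * k)^2) / 2)) * exp (\<i> * complex_of_real (k*u)))"
    and "(\<integral>k. complex_of_real (exp (- ((\<sigma> * k)^2) / 2)) * exp (\<i> * complex_of_real (k*u)) \<partial>lborel)
          = complex_of_real (sqrt (2*pi) / \<sigma> * exp (- (u^2) / (2*\<sigma>^2)))"
proof -
  have nd: "normal_density 0 (1/\<sigma>) k = \<sigma> / sqrt (2*pi) * exp (- ((\<sigma> * k)^2) / 2)" for k
    using s by (simp add: normal_density_def real_sqrt_mult real_sqrt_divide power_divide field_simps power_mult_distrib)
  have "integrable lborel (\<lambda>k. (sqrt (2*pi) / \<sigma>) * normal_density 0 (1/\<sigma>) k)"
    using s by (intro integrable_mult_right integrable_normal_density) auto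
  then show int: "integrable lborel (\<lambda>k. complex_of_real (exp (- ((\<sigma> * k)^2) / 2)) * exp (\<i> * complex_of_real (k*u)))"
  proof (rule Bochner_Integration.integrable_bound)
    show "(\<lambda>k. complex_of_real (exp (- ((\<sigma> * k)^2) / 2)) * exp (\<i> * complex_of_real (k*u))) \<in> borel_measurable lborel"
      by measurable
    show "AE x in lborel. norm (complex_of_real (exp (- ((\<sigma> * x)^2) / 2)) * exp (\<i> * complex_of_real (x*u))) \<le> norm (sqrt (2*pi) / \<sigma> * normal_density 0 (1/\<sigma>) x)"
      using s by (intro AE_I2) (simp add: nd norm_mult)
  qed
  define \<theta> where "\<theta> = u / \<sigma>"
  have "char std_normal_distribution \<theta> = complex_of_real (exp (- (\<theta>^2) / 2))"
    by (simp add: char_std_normal_distribution)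
  then have A: "(\<integral>x. std_normal_density x *\<^sub>R exp (\<i> * complex_of_real (\<theta> * x)) \<partial>lborel) = complex_of_real (exp (- (\<theta>^2) / 2))"
    unfolding char_def by (subst (asm) integral_density) auto
  have B: "(\<integral>x. std_normal_density x *\<^sub>R exp (\<i> * complex_of_real (\<theta> * x)) \<partial>lborel)
      = \<bar>\<sigma>\<bar> *\<^sub>R (\<integral>k. std_normal_density (0 + \<sigma> * k) *\<^sub>R exp (\<i> * complex_of_real (\<theta> * (0 + \<sigma> * k))) \<partial>lborel)"
    by (rule lborel_integral_real_affine) (use s in simp)
  have C: "std_normal_density (0 + \<sigma> * k) *\<^sub>R exp (\<i> * complex_of_real (\<theta> * (0 + \<sigma> * k)))
        = complex_of_real (1 / sqrt (2*pi)) * (complex_of_real (exp (- ((\<sigma> * k)^2) / 2)) * exp (\<i> * complex_of_real (k*u)))" for k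
    using s by (simp add: std_normal_density_def \<theta>_def scaleR_conv_of_real field_simps)
  define X where "X = (\<integral>k. complex_of_real (exp (- ((\<sigma> * k)^2) / 2)) * exp (\<i> * complex_of_real (k*u)) \<partial>lborel)"
  have E: "complex_of_real (exp (- (\<theta>^2) / 2)) = complex_of_real (\<sigma> / sqrt (2*pi)) * X"
    using s unfolding A[symmetric] B C X_def by (simp add: scaleR_conv_of_real)
  have one: "complex_of_real (sqrt (2*pi) / \<sigma>) * complex_of_real (\<sigma> / sqrt (2*pi)) = 1"
    using s by (simp flip: of_real_mult)
  have "X = complex_of_real (sqrt (2*pi) / \<sigma>) * complex_of_real (exp (- (\<theta>^2) / 2))"
    unfolding E mult.assoc[symmetric] one by simp
  also have "\<dots> = complex_of_real (sqrt (2*pi) / \<sigma> * exp (- (u^2) / (2*\<sigma>^2)))"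
    using s by (simp add: \<theta>_def power_divide flip: of_real_mult)
  finally show "(\<integral>k. complex_of_real (exp (- ((\<sigma> * k)^2) / 2)) * exp (\<i> * complex_of_real (k*u)) \<partial>lborel)
          = complex_of_real (sqrt (2*pi) / \<sigma> * exp (- (u^2) / (2*\<sigma>^2)))"
    unfolding X_def .
qed


definition gk :: "real \<Rightarrow> real \<Rightarrow> real" where
  "gk \<sigma> s = sqrt (2*pi) / \<sigma> * exp (- (s^2) / (2*\<sigma>^2))"

lemma gk_nonneg: "0 < \<sigma> \<Longrightarrow> 0 \<le> gk \<sigma> s"
  by (simp add: gk_def)

lemma gauss_mgf_1d:
  fixes \<sigma> r :: real
  assumes s: "0 < \<sigma>"
  shows "integrable lborel (\<lambda>u. gk \<sigma> u * exp (r*u))"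
    and "(\<integral>u. gk \<sigma> u * exp (r*u) \<partial>lborel) = 2*pi*exp (\<sigma>^2*r^2/2)"
proof -
  have eq: "gk \<sigma> u * exp (r*u) = 2*pi*exp (\<sigma>^2*r^2/2) * normal_density (\<sigma>^2*r) \<sigma> u" for u
  proof -
    have sq: "sqrt (2*pi*\<sigma>^2) = sqrt (2*pi) * \<sigma>"
      using s by (simp add: real_sqrt_mult)
    have ex: "exp (- (u^2) / (2*\<sigma>^2)) * exp (r*u) = exp (\<sigma>^2*r^2/2) * exp (- ((u - \<sigma>^2*r)^2) / (2*\<sigma>^2))"
      unfolding exp_add[symmetric] using s by (intro arg_cong[where f=exp]) (simp add: field_simps power2_eq_square)
    have c: "sqrt (2*pi) / \<sigma> = 2*pi * (1 / (sqrt (2*pi) * \<sigma>))"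
      using s by (simp add: field_simps real_sqrt_mult_self)
    have "gk \<sigma> u * exp (r*u) = sqrt (2*pi) / \<sigma> * (exp (- (u^2) / (2*\<sigma>^2)) * exp (r*u))"
      by (simp add: gk_def)
    also have "\<dots> = 2*pi * (1 / (sqrt (2*pi) * \<sigma>)) * (exp (\<sigma>^2*r^2/2) * exp (- ((u - \<sigma>^2*r)^2) / (2*\<sigma>^2)))"
      unfolding ex c ..
    also have "\<dots> = 2*pi*exp (\<sigma>^2*r^2/2) * normal_density (\<sigma>^2*r) \<sigma> u"
      unfolding normal_density_def sq by (simp add: ac_simps)
    finally show ?thesis .
  qed
  show "integrable lborel (\<lambda>u. gk \<sigma> u * exp (r*u))"
    unfolding eq using s by (intro integrable_mult_right integrable_normal_density) auto
  show "(\<integral>u. gk \<sigma> u * exp (r*u) \<partial>lborel) = 2*pi*exp (\<sigma>^2*r^2/2)"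
    unfolding eq using s by simp
qed

definition Phi :: "real \<Rightarrow> 'a::euclidean_space \<Rightarrow> real" where
  "Phi \<sigma> k = (\<Prod>b\<in>Basis. exp (- ((\<sigma> * (k \<bullet> b))^2) / 2))"

definition G :: "real \<Rightarrow> 'a::euclidean_space \<Rightarrow> real" where
  "G \<sigma> u = (\<Prod>b\<in>Basis. gk \<sigma> (u \<bullet> b))"

lemma G_nonneg: "0 < \<sigma> \<Longrightarrow> 0 \<le> G \<sigma> u"
  unfolding G_def by (intro prod_nonneg) (simp add: gk_nonneg)

lemma Phi_pos: "0 < Phi \<sigma> k"
  unfolding Phi_def by (intro prod_pos) simp

lemma Phi_le1: "Phi \<sigma> k \<le> 1"
  unfolding Phi_def by (intro prod_le_1) auto

lemma B0_formula:
  fixes u :: "'a::euclidean_space"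
  assumes s: "0 < \<sigma>"
  shows "integrable lborel (\<lambda>k::'a. complex_of_real (Phi \<sigma> k) * exp (\<i> * complex_of_real (k \<bullet> u)))"
    and "(\<integral>k. complex_of_real (Phi \<sigma> k) * exp (\<i> * complex_of_real (k \<bullet> u)) \<partial>lborel) = complex_of_real (G \<sigma> u)"
proof -
  define f where "f b s = complex_of_real (exp (- ((\<sigma> * s)^2) / 2)) * exp (\<i> * complex_of_real (s * (u \<bullet> b)))" for b s
  have pw: "complex_of_real (Phi \<sigma> k) * exp (\<i> * complex_of_real (k \<bullet> u)) = (\<Prod>b\<in>Basis. f b (k \<bullet> b))" for k
  proof -
    have "exp (\<i> * complex_of_real (k \<bullet> u)) = (\<Prod>b\<in>Basis. exp (\<i> * complex_of_real ((k \<bullet> b) * (u \<bullet> b))))"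
      by (subst euclidean_inner) (simp add: of_real_sum sum_distrib_left exp_sum)
    then show ?thesis
      unfolding f_def Phi_def by (simp add: prod.distrib of_real_prod)
  qed
  have fi: "\<And>b. b \<in> Basis \<Longrightarrow> integrable lborel (f b)"
    unfolding f_def using gauss_ft_1d(1)[OF s] by blast
  show "integrable lborel (\<lambda>k::'a. complex_of_real (Phi \<sigma> k) * exp (\<i> * complex_of_real (k \<bullet> u)))"
    unfolding pw by (rule lborel_prod_basis(1)[OF fi])
  show "(\<integral>k. complex_of_real (Phi \<sigma> k) * exp (\<i> * complex_of_real (k \<bullet> u)) \<partial>lborel) = complex_of_real (G \<sigma> u)"
  proof -
    have "(\<integral>k. (\<Prod>b\<in>Basis. f b (k \<bullet> b)) \<partial>(lborel::'a measure)) = (\<Prod>b\<in>Basis. integral\<^sup>L lborel (f b))"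
      by (rule lborel_prod_basis(2)[OF fi])
    also have "\<dots> = complex_of_real (G \<sigma> u)"
      unfolding G_def of_real_prod
      apply (intro prod.cong refl)
      apply (unfold f_def[abs_def])
      apply (subst gauss_ft_1d(2)[OF s])
      by (simp add: gk_def)
    finally show ?thesis unfolding pw .
  qed
qed

lemma Phi_integrable:
  assumes s: "0 < \<sigma>"
  shows "integrable lborel (Phi \<sigma> :: 'a::euclidean_space \<Rightarrow> real)"
proof -
  have "integrable lborel (\<lambda>k::'a. norm (complex_of_real (Phi \<sigma> k) * exp (\<i> * complex_of_real (k \<bullet> 0))))"
    by (rule integrable_norm[OF B0_formula(1)[OF s]])
  moreover have "(\<lambda>k::'a. norm (complex_of_real (Phi \<sigma> k) * exp (\<i> * complex_of_real (k \<bullet> 0)))) = Phi \<sigma>"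
    by (intro ext) (simp add: norm_mult Phi_pos abs_of_pos)
  ultimately show ?thesis by simp
qed

lemma G_mgf:
  fixes \<tau> :: "'a::euclidean_space"
  assumes s: "0 < \<sigma>"
  shows "integrable lborel (\<lambda>u. G \<sigma> u * exp (\<tau> \<bullet> u))"
    and "(\<integral>u. G \<sigma> u * exp (\<tau> \<bullet> u) \<partial>lborel) = (2*pi)^DIM('a) * exp (\<sigma>^2 * (norm \<tau>)^2 / 2)"
proof -
  define f where "f b s = gk \<sigma> s * exp ((\<tau> \<bullet> b) * s)" for b s
  have pw: "G \<sigma> u * exp (\<tau> \<bullet> u) = (\<Prod>b\<in>Basis. f b (u \<bullet> b))" for u
  proof -
    have "exp (\<tau> \<bullet> u) = (\<Prod>b\<in>Basis. exp ((\<tau> \<bullet> b) * (u \<bullet> b)))"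
      by (subst euclidean_inner) (simp add: exp_sum inner_commute)
    then show ?thesis
      unfolding f_def G_def by (simp add: prod.distrib)
  qed
  have fi: "\<And>b. b \<in> Basis \<Longrightarrow> integrable lborel (f b)"
    unfolding f_def using gauss_mgf_1d(1)[OF s] by blast
  show "integrable lborel (\<lambda>u. G \<sigma> u * exp (\<tau> \<bullet> u))"
    unfolding pw by (rule lborel_prod_basis(1)[OF fi])
  have nt: "(norm \<tau>)^2 = (\<Sum>b\<in>Basis. (\<tau> \<bullet> b)^2)"
    by (simp only: power2_norm_eq_inner) (simp add: euclidean_inner[of \<tau> \<tau>] power2_eq_square)
  show "(\<integral>u. G \<sigma> u * exp (\<tau> \<bullet> u) \<partial>lborel) = (2*pi)^DIM('a) * exp (\<sigma>^2 * (norm \<tau>)^2 / 2)"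
  proof -
    have "(\<integral>u. (\<Prod>b\<in>Basis. f b (u \<bullet> b)) \<partial>(lborel::'a measure)) = (\<Prod>b\<in>Basis. integral\<^sup>L lborel (f b))"
      by (rule lborel_prod_basis(2)[OF fi])
    also have "\<dots> = (\<Prod>b\<in>(Basis::'a set). 2*pi*exp (\<sigma>^2*(\<tau> \<bullet> b)^2/2))"
      by (intro prod.cong refl) (simp add: f_def[abs_def] gauss_mgf_1d(2)[OF s])
    also have "\<dots> = (2*pi)^DIM('a) * exp (\<sigma>^2 * (norm \<tau>)^2 / 2)"
      by (simp add: prod.distrib nt exp_sum sum_distrib_left sum_divide_distrib)
    finally show ?thesis unfolding pw .
  qed
qed

lemma exp_norm_integrable:
  assumes c: "0 < c"
  shows "integrable lborel (\<lambda>y::'a::euclidean_space. exp (- c * norm y))"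
proof -
  define e where "e = c / DIM('a)"
  have e: "0 < e" using c by (simp add: e_def)
  have fi: "\<And>b. b \<in> (Basis::'a set) \<Longrightarrow> integrable lborel (\<lambda>s. exp (- e * \<bar>s\<bar>))"
    using integrable_exp_neg_abs[OF e] .
  have pi: "integrable lborel (\<lambda>y::'a. \<Prod>b\<in>Basis. exp (- e * \<bar>y \<bullet> b\<bar>))"
    by (rule lborel_prod_basis(1)[OF fi])
  show ?thesis
  proof (rule Bochner_Integration.integrable_bound[OF pi])
    show "(\<lambda>y::'a. exp (- c * norm y)) \<in> borel_measurable lborel" by measurable
    show "AE y in lborel. norm (exp (- c * norm (y::'a))) \<le> norm (\<Prod>b\<in>Basis. exp (- e * \<bar>y \<bullet> b\<bar>))"
    proof (rule AE_I2)
      fix y :: 'a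
      have "(\<Sum>b\<in>Basis. \<bar>y \<bullet> b\<bar>) \<le> of_nat (card (Basis::'a set)) * norm y"
        by (rule sum_bounded_above) (rule Basis_le_norm)
      then have "e * (\<Sum>b\<in>Basis. \<bar>y \<bullet> b\<bar>) \<le> c * norm y"
        using c by (simp add: e_def field_simps)
      then have "exp (- c * norm y) \<le> exp (\<Sum>b\<in>Basis. - e * \<bar>y \<bullet> b\<bar>)"
        by (simp add: sum_distrib_left[symmetric] sum_negf)
      also have "\<dots> = (\<Prod>b\<in>Basis. exp (- e * \<bar>y \<bullet> b\<bar>))" by (simp add: exp_sum)
      finally show "norm (exp (- c * norm y)) \<le> norm (\<Prod>b\<in>Basis. exp (- e * \<bar>y \<bullet> b\<bar>))"
        by (simp add: prod_nonneg abs_prod)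
    qed
  qed
qed


lemma Phi_measurable[measurable]: "Phi \<sigma> \<in> borel_measurable borel"
  unfolding Phi_def by measurable

lemma G_measurable[measurable]: "G \<sigma> \<in> borel_measurable borel"
  unfolding G_def gk_def by measurable

definition Bn :: "('a::euclidean_space \<Rightarrow> real) \<Rightarrow> real \<Rightarrow> nat \<Rightarrow> 'a \<Rightarrow> complex" where
  "Bn a \<sigma> n x = (\<integral>k. complex_of_real (Phi \<sigma> k) * exp (\<i> * complex_of_real (k \<bullet> x)) * fourier_hat a k 0 ^ n \<partial>lborel)"

context
  fixes a :: "'a::euclidean_space \<Rightarrow> real"
  assumes a_nn: "\<And>y. 0 \<le> a y" and a_int: "integrable lborel a" and a_one: "(LINT y|lborel. a y) = 1"
    and hat_L1: "integrable lborel (\<lambda>k. fourier_hat a k 0)"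
begin

lemma a_meas[measurable]: "a \<in> borel_measurable borel"
  using borel_measurable_integrable[OF a_int] by simp

lemma ah_meas[measurable]: "(\<lambda>k. fourier_hat a k 0) \<in> borel_measurable borel"
  using borel_measurable_integrable[OF hat_L1] by simp

lemma fh0: "fourier_hat a k 0 = (\<integral>y. exp (- (\<i> * complex_of_real (k \<bullet> y))) * complex_of_real (a y) \<partial>lborel)"
  by (simp add: fourier_hat_def)

lemma ah_le1: "norm (fourier_hat a k 0) \<le> 1"
proof -
  have "norm (fourier_hat a k 0) \<le> (\<integral>y. norm (exp (- (\<i> * complex_of_real (k \<bullet> y))) * complex_of_real (a y)) \<partial>lborel)"
    unfolding fh0 by (rule integral_norm_bound)
  also have "\<dots> = (\<integral>y. a y \<partial>lborel)"
    by (intro Bochner_Integration.integral_cong refl) (simp add: norm_mult a_nn)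
  finally show ?thesis using a_one by simp
qed

lemma Bn_integrable:
  assumes s: "0 < \<sigma>"
  shows "integrable lborel (\<lambda>k. complex_of_real (Phi \<sigma> k) * exp (\<i> * complex_of_real (k \<bullet> x)) * fourier_hat a k 0 ^ n)"
proof (rule Bochner_Integration.integrable_bound[OF Phi_integrable[OF s]])
  show "(\<lambda>k. complex_of_real (Phi \<sigma> k) * exp (\<i> * complex_of_real (k \<bullet> x)) * fourier_hat a k 0 ^ n) \<in> borel_measurable lborel"
    by measurable
  show "AE k in lborel. norm (complex_of_real (Phi \<sigma> k) * exp (\<i> * complex_of_real (k \<bullet> x)) * fourier_hat a k 0 ^ n) \<le> norm (Phi \<sigma> k)"
  proof (rule AE_I2)
    fix k :: 'a
    have "norm (fourier_hat a k 0) ^ n \<le> 1" using ah_le1 by (simp add: power_le_one)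
    then show "norm (complex_of_real (Phi \<sigma> k) * exp (\<i> * complex_of_real (k \<bullet> x)) * fourier_hat a k 0 ^ n) \<le> norm (Phi \<sigma> k)"
      using Phi_pos[of \<sigma> k] by (simp add: norm_mult norm_power mult_left_le)
  qed
qed

lemma Bn_norm_le: "0 < \<sigma> \<Longrightarrow> norm (Bn a \<sigma> n x) \<le> (\<integral>k. Phi \<sigma> (k::'a) \<partial>lborel)"
proof -
  assume s: "0 < \<sigma>"
  have "norm (Bn a \<sigma> n x) \<le> (\<integral>k. norm (complex_of_real (Phi \<sigma> k) * exp (\<i> * complex_of_real (k \<bullet> x)) * fourier_hat a k 0 ^ n) \<partial>lborel)"
    unfolding Bn_def by (rule integral_norm_bound)
  also have "\<dots> \<le> (\<integral>k. Phi \<sigma> (k::'a) \<partial>lborel)"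
  proof (rule Bochner_Integration.integral_mono[OF integrable_norm[OF Bn_integrable[OF s]] Phi_integrable[OF s]])
    fix k :: 'a
    have "norm (fourier_hat a k 0) ^ n \<le> 1" using ah_le1 by (simp add: power_le_one)
    then show "norm (complex_of_real (Phi \<sigma> k) * exp (\<i> * complex_of_real (k \<bullet> x)) * fourier_hat a k 0 ^ n) \<le> Phi \<sigma> k"
      using Phi_pos[of \<sigma> k] by (simp add: norm_mult norm_power mult_left_le)
  qed
  finally show ?thesis .
qed

lemma Bn_meas[measurable]: "0 < \<sigma> \<Longrightarrow> Bn a \<sigma> n \<in> borel_measurable borel"
proof -
  have "(\<lambda>x. Bn a \<sigma> n x) \<in> borel_measurable lborel"
    unfolding Bn_def
    by (rule lborel.borel_measurable_lebesgue_integral) measurable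
  then show "Bn a \<sigma> n \<in> borel_measurable borel" by simp
qed

lemma Bn_rec:
  assumes s: "0 < \<sigma>"
  shows "Bn a \<sigma> (Suc n) x = (\<integral>y. complex_of_real (a y) * Bn a \<sigma> n (x - y) \<partial>lborel)"
proof -
  define h where "h k y = complex_of_real (Phi \<sigma> k) * exp (\<i> * complex_of_real (k \<bullet> (x - y))) * fourier_hat a k 0 ^ n * complex_of_real (a y)" for k y :: 'a
  have hm: "(\<lambda>(k,y). h k y) \<in> borel_measurable (lborel \<Otimes>\<^sub>M lborel)"
    unfolding h_def by measurable
  have nh: "norm (h k y) = (Phi \<sigma> k * norm (fourier_hat a k 0) ^ n) * a y" for k y
    using Phi_pos[of \<sigma> k] a_nn[of y] by (simp add: h_def norm_mult norm_power)
  have pw1: "norm (fourier_hat a k 0) ^ n \<le> 1" for k using ah_le1 by (simp add: power_le_one)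
  have hint: "integrable (lborel \<Otimes>\<^sub>M lborel) (\<lambda>(k,y). h k y)"
  proof (rule lborel_pair.Fubini_integrable)
    show "(\<lambda>(k,y). h k y) \<in> borel_measurable (lborel \<Otimes>\<^sub>M lborel)" by (rule hm)
    have "(LBINT y. norm (case (k, y) of (k, y) \<Rightarrow> h k y)) = Phi \<sigma> k * norm (fourier_hat a k 0) ^ n" for k
      using a_one by (simp add: nh)
    moreover have "integrable lborel (\<lambda>k. Phi \<sigma> k * norm (fourier_hat a k 0) ^ n)"
    proof (rule Bochner_Integration.integrable_bound[OF Phi_integrable[OF s]])
      show "(\<lambda>k. Phi \<sigma> k * norm (fourier_hat a k 0) ^ n) \<in> borel_measurable lborel" by measurable
      show "AE k in lborel. norm (Phi \<sigma> k * norm (fourier_hat a k 0) ^ n) \<le> norm (Phi \<sigma> k)"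
        using Phi_pos[of \<sigma>] pw1 by (intro AE_I2) (simp add: abs_mult mult_left_le)
    qed
    ultimately show "integrable lborel (\<lambda>k. LBINT y. norm (case (k, y) of (k, y) \<Rightarrow> h k y))"
      by simp
    show "AE k in lborel. integrable lborel (\<lambda>y. case (k, y) of (k, y) \<Rightarrow> h k y)"
    proof (rule AE_I2)
      fix k :: 'a
      have "integrable lborel (\<lambda>y. Phi \<sigma> k * a y)" using a_int by simp
      then show "integrable lborel (\<lambda>y. case (k, y) of (k, y) \<Rightarrow> h k y)"
      proof (rule Bochner_Integration.integrable_bound)
        show "(\<lambda>y. case (k, y) of (k, y) \<Rightarrow> h k y) \<in> borel_measurable lborel"
          unfolding prod.case h_def by measurable
        show "AE y in lborel. norm (case (k, y) of (k, y) \<Rightarrow> h k y) \<le> norm (Phi \<sigma> k * a y)"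
          using Phi_pos[of \<sigma> k] a_nn pw1[of k]
          by (intro AE_I2) (simp add: nh abs_mult mult_left_le mult_left_le_one_le)
      qed
    qed
  qed
  have e: "exp (\<i> * complex_of_real (k \<bullet> (x - y))) = exp (\<i> * complex_of_real (k \<bullet> x)) * exp (- (\<i> * complex_of_real (k \<bullet> y)))" for k y :: 'a
    by (simp add: inner_diff_right algebra_simps flip: exp_add)
  have "Bn a \<sigma> (Suc n) x = (\<integral>k. (\<integral>y. h k y \<partial>lborel) \<partial>lborel)"
    unfolding Bn_def
  proof (intro Bochner_Integration.integral_cong refl)
    fix k :: 'a
    have "complex_of_real (Phi \<sigma> k) * exp (\<i> * complex_of_real (k \<bullet> x)) * fourier_hat a k 0 ^ Suc n
       = (complex_of_real (Phi \<sigma> k) * exp (\<i> * complex_of_real (k \<bullet> x)) * fourier_hat a k 0 ^ n) * fourier_hat a k 0"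
      by (simp add: algebra_simps)
    also have "\<dots> = (\<integral>y. (complex_of_real (Phi \<sigma> k) * exp (\<i> * complex_of_real (k \<bullet> x)) * fourier_hat a k 0 ^ n) * (exp (- (\<i> * complex_of_real (k \<bullet> y))) * complex_of_real (a y)) \<partial>lborel)"
      unfolding fh0[of k] by (rule integral_mult_right_zero[symmetric])
    also have "\<dots> = (\<integral>y. h k y \<partial>lborel)"
      unfolding h_def e by (intro Bochner_Integration.integral_cong refl) (simp add: algebra_simps)
    finally show "complex_of_real (Phi \<sigma> k) * exp (\<i> * complex_of_real (k \<bullet> x)) * fourier_hat a k 0 ^ Suc n = (\<integral>y. h k y \<partial>lborel)" .
  qed
  also have "\<dots> = (\<integral>y. (\<integral>k. h k y \<partial>lborel) \<partial>lborel)"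
    by (rule lborel_pair.Fubini_integral[OF hint, symmetric])
  also have "\<dots> = (\<integral>y. complex_of_real (a y) * Bn a \<sigma> n (x - y) \<partial>lborel)"
  proof (intro Bochner_Integration.integral_cong refl)
    fix y :: 'a
    have "(\<integral>k. h k y \<partial>lborel) = (\<integral>k. complex_of_real (a y) * (complex_of_real (Phi \<sigma> k) * exp (\<i> * complex_of_real (k \<bullet> (x - y))) * fourier_hat a k 0 ^ n) \<partial>lborel)"
      by (intro Bochner_Integration.integral_cong refl) (simp add: h_def algebra_simps)
    also have "\<dots> = complex_of_real (a y) * Bn a \<sigma> n (x - y)"
      unfolding Bn_def by (rule integral_mult_right_zero)
    finally show "(\<integral>k. h k y \<partial>lborel) = complex_of_real (a y) * Bn a \<sigma> n (x - y)" .
  qed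
  finally show ?thesis .
qed

lemma Bn0: "0 < \<sigma> \<Longrightarrow> Bn a \<sigma> 0 u = complex_of_real (G \<sigma> u)"
  unfolding Bn_def by (simp add: B0_formula(2))

lemma Bn_step:
  assumes s: "0 < \<sigma>"
  shows "norm (Bn a \<sigma> (Suc m) x) * exp (\<tau> \<bullet> x) \<le> (\<integral>y. (a y * exp (\<tau> \<bullet> y)) * (norm (Bn a \<sigma> m (x - y)) * exp (\<tau> \<bullet> (x - y))) \<partial>lborel)"
proof -
  have "norm (Bn a \<sigma> (Suc m) x) \<le> (\<integral>y. norm (complex_of_real (a y) * Bn a \<sigma> m (x - y)) \<partial>lborel)"
    unfolding Bn_rec[OF s] by (rule integral_norm_bound)
  then have "norm (Bn a \<sigma> (Suc m) x) * exp (\<tau> \<bullet> x) \<le> (\<integral>y. norm (complex_of_real (a y) * Bn a \<sigma> m (x - y)) \<partial>lborel) * exp (\<tau> \<bullet> x)"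
    by (rule mult_right_mono) simp
  also have "\<dots> = (\<integral>y. norm (complex_of_real (a y) * Bn a \<sigma> m (x - y)) * exp (\<tau> \<bullet> x) \<partial>lborel)"
    by (rule integral_mult_left_zero[symmetric])
  also have "\<dots> = (\<integral>y. (a y * exp (\<tau> \<bullet> y)) * (norm (Bn a \<sigma> m (x - y)) * exp (\<tau> \<bullet> (x - y))) \<partial>lborel)"
  proof (intro Bochner_Integration.integral_cong refl)
    fix y :: 'a
    have "exp (\<tau> \<bullet> x) = exp (\<tau> \<bullet> y) * exp (\<tau> \<bullet> (x - y))"
      by (simp add: inner_diff_right flip: exp_add)
    then show "norm (complex_of_real (a y) * Bn a \<sigma> m (x - y)) * exp (\<tau> \<bullet> x) = (a y * exp (\<tau> \<bullet> y)) * (norm (Bn a \<sigma> m (x - y)) * exp (\<tau> \<bullet> (x - y)))"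
      using a_nn[of y] by (simp add: norm_mult)
  qed
  finally show ?thesis .
qed

lemma Bn_bound:
  fixes \<tau> :: 'a and C :: real
  assumes s: "0 < \<sigma>" and aw: "\<And>y. a y * exp (\<tau> \<bullet> y) \<le> C"
    and int_aw: "integrable lborel (\<lambda>y. a y * exp (\<tau> \<bullet> y))"
  shows "norm (Bn a \<sigma> (Suc n) x) * exp (\<tau> \<bullet> x) \<le> C * ((2*pi)^DIM('a) * exp (\<sigma>^2 * (norm \<tau>)^2 / 2)) * (\<integral>y. a y * exp (\<tau> \<bullet> y) \<partial>lborel)^n"
proof (induction n arbitrary: x)
  have C0: "0 \<le> C" using aw[of 0] a_nn[of 0] by (smt (verit) exp_gt_zero mult_nonneg_nonneg)
  case 0
  have "norm (Bn a \<sigma> (Suc 0) x) * exp (\<tau> \<bullet> x) \<le> (\<integral>y. (a y * exp (\<tau> \<bullet> y)) * (norm (Bn a \<sigma> 0 (x - y)) * exp (\<tau> \<bullet> (x - y))) \<partial>lborel)"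
    by (rule Bn_step[OF s])
  also have "\<dots> \<le> (\<integral>y. C * (G \<sigma> (x - y) * exp (\<tau> \<bullet> (x - y))) \<partial>lborel)"
  proof (rule Bochner_Integration.integral_mono')
    show "integrable lborel (\<lambda>y. C * (G \<sigma> (x - y) * exp (\<tau> \<bullet> (x - y))))"
      by (intro integrable_mult_right integrable_eucl_reflect[where f="\<lambda>u. G \<sigma> u * exp (\<tau> \<bullet> u)"] G_mgf(1)[OF s])
    fix y :: 'a
    show "(a y * exp (\<tau> \<bullet> y)) * (norm (Bn a \<sigma> 0 (x - y)) * exp (\<tau> \<bullet> (x - y))) \<le> C * (G \<sigma> (x - y) * exp (\<tau> \<bullet> (x - y)))"
      unfolding Bn0[OF s] norm_of_real abs_of_nonneg[OF G_nonneg[OF s]] using G_nonneg[OF s, of "x - y"] aw[of y]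
      by (intro mult_right_mono) auto
    show "0 \<le> C * (G \<sigma> (x - y) * exp (\<tau> \<bullet> (x - y)))"
      using G_nonneg[OF s, of "x - y"] C0 by simp
  qed
  also have "\<dots> = C * (\<integral>u. G \<sigma> u * exp (\<tau> \<bullet> u) \<partial>lborel)"
    by (simp add: integral_eucl_reflect[where f="\<lambda>u. G \<sigma> u * exp (\<tau> \<bullet> u)"])
  also have "\<dots> = C * ((2*pi)^DIM('a) * exp (\<sigma>^2 * (norm \<tau>)^2 / 2)) * (\<integral>y. a y * exp (\<tau> \<bullet> y) \<partial>lborel)^0"
    by (simp add: G_mgf(2)[OF s])
  finally show ?case .
next
  have C0: "0 \<le> C" using aw[of 0] a_nn[of 0] by (smt (verit) exp_gt_zero mult_nonneg_nonneg)
  case (Suc n)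
  define K where "K = C * ((2*pi)^DIM('a) * exp (\<sigma>^2 * (norm \<tau>)^2 / 2))"
  define M where "M = (\<integral>y. a y * exp (\<tau> \<bullet> y) \<partial>lborel)"
  have M0: "0 \<le> M" unfolding M_def using a_nn by (intro Bochner_Integration.integral_nonneg) simp
  have K0: "0 \<le> K" unfolding K_def using C0 by simp
  have "norm (Bn a \<sigma> (Suc (Suc n)) x) * exp (\<tau> \<bullet> x) \<le> (\<integral>y. (a y * exp (\<tau> \<bullet> y)) * (norm (Bn a \<sigma> (Suc n) (x - y)) * exp (\<tau> \<bullet> (x - y))) \<partial>lborel)"
    by (rule Bn_step[OF s])
  also have "\<dots> \<le> (\<integral>y. (a y * exp (\<tau> \<bullet> y)) * (K * M ^ n) \<partial>lborel)"
  proof (rule Bochner_Integration.integral_mono')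
    show "integrable lborel (\<lambda>y. (a y * exp (\<tau> \<bullet> y)) * (K * M ^ n))"
      by (intro integrable_mult_left int_aw)
    fix y :: 'a
    show "(a y * exp (\<tau> \<bullet> y)) * (norm (Bn a \<sigma> (Suc n) (x - y)) * exp (\<tau> \<bullet> (x - y))) \<le> (a y * exp (\<tau> \<bullet> y)) * (K * M ^ n)"
      using Suc.IH[of "x - y"] a_nn[of y] unfolding K_def M_def
      by (intro mult_left_mono) auto
    show "0 \<le> (a y * exp (\<tau> \<bullet> y)) * (K * M ^ n)"
      using a_nn[of y] K0 M0 by simp
  qed
  also have "\<dots> = K * M ^ Suc n"
    by (simp add: integral_mult_left_zero M_def)
  finally show ?case unfolding K_def M_def .
qed

end


lemma sum_le_exp: "0 \<le> (x::real) \<Longrightarrow> (\<Sum>n<N. x^n / fact n) \<le> exp x"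
proof -
  assume x: "0 \<le> x"
  have sm: "(\<lambda>n. x^n /\<^sub>R fact n) sums exp x" by (rule exp_converges)
  have "(\<Sum>n<N. x^n /\<^sub>R fact n) \<le> (\<Sum>n. x^n /\<^sub>R fact n)"
    by (rule sum_le_suminf) (use sm x in \<open>auto simp: sums_iff\<close>)
  then show ?thesis using sm by (simp add: sums_iff divide_inverse mult.commute)
qed

lemma fact_div_mono: "0 \<le> (x::real) \<Longrightarrow> x / fact (Suc n) \<le> x / fact n"
  by (intro divide_left_mono) (auto simp: fact_mono)

lemma partial_exp_bound:
  fixes z :: complex
  shows "norm (\<Sum>n<N. z^(Suc n) /\<^sub>R fact (Suc n)) \<le> norm z * exp (norm z)"
proof -
  have "norm (\<Sum>n<N. z^(Suc n) /\<^sub>R fact (Suc n)) \<le> (\<Sum>n<N. norm (z^(Suc n) /\<^sub>R fact (Suc n)))"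
    by (rule norm_sum)
  also have "\<dots> = (\<Sum>n<N. norm z * (norm z ^ n / fact (Suc n)))"
    by (intro sum.cong refl) (simp add: norm_power norm_mult divide_inverse del: power_Suc, simp)
  also have "\<dots> \<le> (\<Sum>n<N. norm z * (norm z ^ n / fact n))"
    by (intro sum_mono mult_left_mono fact_div_mono) auto
  also have "\<dots> = norm z * (\<Sum>n<N. norm z ^ n / fact n)"
    by (simp add: sum_distrib_left)
  also have "\<dots> \<le> norm z * exp (norm z)"
    by (intro mult_left_mono sum_le_exp) auto
  finally show ?thesis .
qed

lemma partial_exp_tendsto:
  fixes z :: complex
  shows "(\<lambda>N. \<Sum>n<N. z^(Suc n) /\<^sub>R fact (Suc n)) \<longlonglongrightarrow> exp z - 1"
proof -
  have "(\<lambda>N. \<Sum>n<N. z^n /\<^sub>R fact n) \<longlonglongrightarrow> exp z"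
    using exp_converges[of z] by (simp add: sums_def)
  then have "(\<lambda>N. \<Sum>n<Suc N. z^n /\<^sub>R fact n) \<longlonglongrightarrow> exp z"
    by (rule LIMSEQ_Suc)
  then have "(\<lambda>N. (\<Sum>n<Suc N. z^n /\<^sub>R fact n) - 1) \<longlonglongrightarrow> exp z - 1"
    by (intro tendsto_diff) auto
  moreover have "(\<Sum>n<Suc N. z^n /\<^sub>R fact n) - 1 = (\<Sum>n<N. z^(Suc n) /\<^sub>R fact (Suc n))" for N
    by (subst sum.lessThan_Suc_shift) simp
  ultimately show ?thesis by simp
qed

lemma exp_minus_one_bound:
  fixes z :: complex
  shows "norm (exp z - 1) \<le> norm z * exp (norm z)"
proof -
  have "(\<lambda>N. norm (\<Sum>n<N. z^(Suc n) /\<^sub>R fact (Suc n))) \<longlonglongrightarrow> norm (exp z - 1)"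
    by (intro tendsto_norm partial_exp_tendsto)
  then show ?thesis
    by (rule LIMSEQ_le_const2) (use partial_exp_bound in auto)
qed

lemma coef_sum_bound:
  fixes t M :: real
  assumes "0 \<le> t" "0 \<le> M"
  shows "(\<Sum>n<N. t^(Suc n) / fact (Suc n) * M^n) \<le> t * exp (t * M)"
proof -
  have "(\<Sum>n<N. t^(Suc n) / fact (Suc n) * M^n) = (\<Sum>n<N. t * ((t*M)^n / fact (Suc n)))"
    by (intro sum.cong refl) (simp add: power_mult_distrib)
  also have "\<dots> \<le> (\<Sum>n<N. t * ((t*M)^n / fact n))"
    using assms by (intro sum_mono mult_left_mono fact_div_mono) auto
  also have "\<dots> = t * (\<Sum>n<N. (t*M)^n / fact n)"
    by (simp add: sum_distrib_left)
  also have "\<dots> \<le> t * exp (t * M)"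
    using assms by (intro mult_left_mono sum_le_exp) auto
  finally show ?thesis .
qed


context
  fixes a :: "'a::euclidean_space \<Rightarrow> real"
  assumes a_nn: "\<And>y. 0 \<le> a y" and a_int: "integrable lborel a" and a_one: "(LINT y|lborel. a y) = 1"
    and hat_L1: "integrable lborel (\<lambda>k. fourier_hat a k 0)"
begin

lemmas ah_meas' [measurable] = ah_meas[OF a_nn a_int a_one hat_L1]
lemmas ah_le1' = ah_le1[OF a_nn a_int a_one hat_L1]
lemmas Bn_integrable' = Bn_integrable[OF a_nn a_int a_one hat_L1]
lemmas Bn_bound' = Bn_bound[OF a_nn a_int a_one hat_L1]

lemma I_sigma_bound:
  fixes \<tau> x :: 'a and C t :: real
  assumes s: "0 < \<sigma>" and t: "0 < t" and aw: "\<And>y. a y * exp (\<tau> \<bullet> y) \<le> C"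
    and int_aw: "integrable lborel (\<lambda>y. a y * exp (\<tau> \<bullet> y))"
  shows "norm (\<integral>k. complex_of_real (Phi \<sigma> k) * exp (\<i> * complex_of_real (k \<bullet> x)) * (exp (complex_of_real t * fourier_hat a k 0) - 1) \<partial>lborel) * exp (\<tau> \<bullet> x)
     \<le> C * ((2*pi)^DIM('a) * exp (\<sigma>^2 * (norm \<tau>)^2 / 2)) * (t * exp (t * (\<integral>y. a y * exp (\<tau> \<bullet> y) \<partial>lborel)))"
proof -
  define K where "K = C * ((2*pi)^DIM('a) * exp (\<sigma>^2 * (norm \<tau>)^2 / 2))"
  define M where "M = (\<integral>y. a y * exp (\<tau> \<bullet> y) \<partial>lborel)"
  have M0: "0 \<le> M" unfolding M_def using a_nn by (intro Bochner_Integration.integral_nonneg) simp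
  have C0: "0 \<le> C" using aw[of 0] a_nn[of 0] by (smt (verit) exp_gt_zero mult_nonneg_nonneg)
  have K0: "0 \<le> K" unfolding K_def using C0 by simp
  define z where "z k = complex_of_real t * fourier_hat a k 0" for k
  define S where "S N k = (\<Sum>n<N. z k ^ Suc n /\<^sub>R fact (Suc n))" for N k
  define F where "F k = complex_of_real (Phi \<sigma> k) * exp (\<i> * complex_of_real (k \<bullet> x))" for k
  have zm[measurable]: "z \<in> borel_measurable borel" unfolding z_def[abs_def] by measurable
  have Fm[measurable]: "F \<in> borel_measurable borel" unfolding F_def[abs_def] by measurable
  have nz: "norm (z k) \<le> t" for k
    using ah_le1'[of k] t by (simp add: z_def norm_mult mult_left_le)
  have nF: "norm (F k) = Phi \<sigma> k" for k
    using Phi_pos[of \<sigma> k] by (simp add: F_def norm_mult)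
  have lim: "(\<lambda>N. \<integral>k. F k * S N k \<partial>lborel) \<longlonglongrightarrow> (\<integral>k. F k * (exp (z k) - 1) \<partial>lborel)"
  proof (rule integral_dominated_convergence[where w="\<lambda>k. Phi \<sigma> k * (t * exp t)"])
    show "(\<lambda>k. F k * (exp (z k) - 1)) \<in> borel_measurable lborel" by measurable
    show "(\<lambda>k. F k * S N k) \<in> borel_measurable lborel" for N unfolding S_def by measurable
    show "integrable lborel (\<lambda>k. Phi \<sigma> k * (t * exp t))"
      by (intro integrable_mult_left Phi_integrable[OF s])
    show "AE k in lborel. (\<lambda>N. F k * S N k) \<longlonglongrightarrow> F k * (exp (z k) - 1)"
      unfolding S_def by (intro AE_I2 tendsto_mult_left partial_exp_tendsto)
    show "AE k in lborel. norm (F k * S N k) \<le> Phi \<sigma> k * (t * exp t)" for N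
    proof (rule AE_I2)
      fix k :: 'a
      have "norm (S N k) \<le> norm (z k) * exp (norm (z k))"
        unfolding S_def by (rule partial_exp_bound)
      also have "\<dots> \<le> t * exp t"
        using nz[of k] t by (intro mult_mono) auto
      finally show "norm (F k * S N k) \<le> Phi \<sigma> k * (t * exp t)"
        using Phi_pos[of \<sigma> k] by (simp add: norm_mult nF)
    qed
  qed
  have eqN: "(\<integral>k. F k * S N k \<partial>lborel) = (\<Sum>n<N. complex_of_real (t^Suc n / fact (Suc n)) * Bn a \<sigma> (Suc n) x)" for N
  proof -
    have "(\<integral>k. F k * S N k \<partial>lborel) = (\<integral>k. (\<Sum>n<N. complex_of_real (t^Suc n / fact (Suc n)) * (F k * fourier_hat a k 0 ^ Suc n)) \<partial>lborel)"
    proof (intro Bochner_Integration.integral_cong refl)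
      fix k :: 'a
      show "F k * S N k = (\<Sum>n<N. complex_of_real (t^Suc n / fact (Suc n)) * (F k * fourier_hat a k 0 ^ Suc n))"
        unfolding S_def sum_distrib_left
        by (intro sum.cong refl) (simp add: z_def power_mult_distrib scaleR_conv_of_real field_simps del: power_Suc)
    qed
    also have "\<dots> = (\<Sum>n<N. (\<integral>k. complex_of_real (t^Suc n / fact (Suc n)) * (F k * fourier_hat a k 0 ^ Suc n) \<partial>lborel))"
      apply (rule Bochner_Integration.integral_sum)
      apply (rule integrable_mult_right)
      unfolding F_def by (rule Bn_integrable'[OF s])
    also have "\<dots> = (\<Sum>n<N. complex_of_real (t^Suc n / fact (Suc n)) * Bn a \<sigma> (Suc n) x)"
      by (intro sum.cong refl) (simp add: Bn_def F_def)
    finally show ?thesis .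
  qed
  have bnd: "norm (\<integral>k. F k * S N k \<partial>lborel) * exp (\<tau> \<bullet> x) \<le> K * (t * exp (t * M))" for N
  proof -
    have "norm (\<integral>k. F k * S N k \<partial>lborel) * exp (\<tau> \<bullet> x) \<le> (\<Sum>n<N. norm (complex_of_real (t^Suc n / fact (Suc n)) * Bn a \<sigma> (Suc n) x)) * exp (\<tau> \<bullet> x)"
      unfolding eqN by (intro mult_right_mono norm_sum) auto
    also have "\<dots> = (\<Sum>n<N. (t^Suc n / fact (Suc n)) * (norm (Bn a \<sigma> (Suc n) x) * exp (\<tau> \<bullet> x)))"
      unfolding sum_distrib_right
    proof (intro sum.cong refl)
      fix n
      have "norm (complex_of_real (t^Suc n / fact (Suc n))) = t^Suc n / fact (Suc n)"
        unfolding norm_of_real using t by simp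
      then show "norm (complex_of_real (t^Suc n / fact (Suc n)) * Bn a \<sigma> (Suc n) x) * exp (\<tau> \<bullet> x) = (t^Suc n / fact (Suc n)) * (norm (Bn a \<sigma> (Suc n) x) * exp (\<tau> \<bullet> x))"
        by (simp only: norm_mult mult.assoc)
    qed
    also have "\<dots> \<le> (\<Sum>n<N. (t^Suc n / fact (Suc n)) * (K * M^n))"
      using t unfolding K_def M_def
      by (intro sum_mono mult_left_mono Bn_bound'[OF s aw int_aw]) auto
    also have "\<dots> = K * (\<Sum>n<N. t^Suc n / fact (Suc n) * M^n)"
      by (simp add: sum_distrib_left algebra_simps)
    also have "\<dots> \<le> K * (t * exp (t * M))"
      using t M0 K0 by (intro mult_left_mono coef_sum_bound) auto
    finally show ?thesis .
  qed
  have "(\<lambda>N. norm (\<integral>k. F k * S N k \<partial>lborel) * exp (\<tau> \<bullet> x)) \<longlonglongrightarrow> norm (\<integral>k. F k * (exp (z k) - 1) \<partial>lborel) * exp (\<tau> \<bullet> x)"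
    by (intro tendsto_mult_right tendsto_norm lim)
  then have "norm (\<integral>k. F k * (exp (z k) - 1) \<partial>lborel) * exp (\<tau> \<bullet> x) \<le> K * (t * exp (t * M))"
    by (rule LIMSEQ_le_const2) (use bnd in auto)
  then show ?thesis unfolding K_def M_def F_def z_def .
qed

lemma I_bound:
  fixes \<tau> x :: 'a and C t :: real
  assumes t: "0 < t" and aw: "\<And>y. a y * exp (\<tau> \<bullet> y) \<le> C"
    and int_aw: "integrable lborel (\<lambda>y. a y * exp (\<tau> \<bullet> y))"
  shows "norm (\<integral>k. exp (\<i> * complex_of_real (k \<bullet> x)) * (exp (complex_of_real t * fourier_hat a k 0) - 1) \<partial>lborel) * exp (\<tau> \<bullet> x)
     \<le> C * ((2*pi)^DIM('a) * exp ((norm \<tau>)^2 / 2)) * (t * exp (t * (\<integral>y. a y * exp (\<tau> \<bullet> y) \<partial>lborel)))"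
proof -
  define sg where "sg m = inverse (real (Suc m))" for m
  have sg0: "0 < sg m" for m by (simp add: sg_def)
  have sg1: "sg m \<le> 1" for m by (simp add: sg_def inverse_le_1_iff)
  have C0: "0 \<le> C" using aw[of 0] a_nn[of 0] by (smt (verit) exp_gt_zero mult_nonneg_nonneg)
  define M where "M = (\<integral>y. a y * exp (\<tau> \<bullet> y) \<partial>lborel)"
  define z where "z k = complex_of_real t * fourier_hat a k 0" for k
  have zm[measurable]: "z \<in> borel_measurable borel" unfolding z_def[abs_def] by measurable
  have nz: "norm (z k) = t * norm (fourier_hat a k 0)" for k
    using t by (simp add: z_def norm_mult)
  have lim: "(\<lambda>m. \<integral>k. complex_of_real (Phi (sg m) k) * exp (\<i> * complex_of_real (k \<bullet> x)) * (exp (z k) - 1) \<partial>lborel)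
      \<longlonglongrightarrow> (\<integral>k. exp (\<i> * complex_of_real (k \<bullet> x)) * (exp (z k) - 1) \<partial>lborel)"
  proof (rule integral_dominated_convergence[where w="\<lambda>k. t * exp t * norm (fourier_hat a k 0)"])
    show "(\<lambda>k. exp (\<i> * complex_of_real (k \<bullet> x)) * (exp (z k) - 1)) \<in> borel_measurable lborel" by measurable
    show "(\<lambda>k. complex_of_real (Phi (sg m) k) * exp (\<i> * complex_of_real (k \<bullet> x)) * (exp (z k) - 1)) \<in> borel_measurable lborel" for m
      by measurable
    show "integrable lborel (\<lambda>k. t * exp t * norm (fourier_hat a k 0))"
      by (intro integrable_mult_right integrable_norm hat_L1)
    show "AE k in lborel. (\<lambda>m. complex_of_real (Phi (sg m) k) * exp (\<i> * complex_of_real (k \<bullet> x)) * (exp (z k) - 1))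
        \<longlonglongrightarrow> exp (\<i> * complex_of_real (k \<bullet> x)) * (exp (z k) - 1)"
    proof (rule AE_I2)
      fix k :: 'a
      have sgl: "sg \<longlonglongrightarrow> 0" unfolding sg_def[abs_def] by (rule LIMSEQ_inverse_real_of_nat)
      have "(\<lambda>m. Phi (sg m) k) \<longlonglongrightarrow> (\<Prod>b\<in>Basis. exp (- ((0 * (k \<bullet> b))^2) / 2))"
        unfolding Phi_def by (intro tendsto_intros sgl) simp
      then have "(\<lambda>m. Phi (sg m) k) \<longlonglongrightarrow> 1" by simp
      then have "(\<lambda>m. complex_of_real (Phi (sg m) k)) \<longlonglongrightarrow> complex_of_real 1" by (rule tendsto_of_real)
      then have "(\<lambda>m. complex_of_real (Phi (sg m) k) * (exp (\<i> * complex_of_real (k \<bullet> x)) * (exp (z k) - 1)))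
          \<longlonglongrightarrow> complex_of_real 1 * (exp (\<i> * complex_of_real (k \<bullet> x)) * (exp (z k) - 1))"
        by (rule tendsto_mult_right)
      then show "(\<lambda>m. complex_of_real (Phi (sg m) k) * exp (\<i> * complex_of_real (k \<bullet> x)) * (exp (z k) - 1))
        \<longlonglongrightarrow> exp (\<i> * complex_of_real (k \<bullet> x)) * (exp (z k) - 1)"
        by (simp add: mult.assoc)
    qed
    show "AE k in lborel. norm (complex_of_real (Phi (sg m) k) * exp (\<i> * complex_of_real (k \<bullet> x)) * (exp (z k) - 1)) \<le> t * exp t * norm (fourier_hat a k 0)" for m
    proof (rule AE_I2)
      fix k :: 'a
      have "norm (exp (z k) - 1) \<le> norm (z k) * exp (norm (z k))" by (rule exp_minus_one_bound)
      also have "\<dots> \<le> t * norm (fourier_hat a k 0) * exp t"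
        unfolding nz using ah_le1'[of k] t by (intro mult_left_mono) (auto simp: mult_left_le)
      finally have "norm (exp (z k) - 1) \<le> t * exp t * norm (fourier_hat a k 0)" by (simp add: ac_simps)
      moreover have "norm (complex_of_real (Phi (sg m) k) * exp (\<i> * complex_of_real (k \<bullet> x)) * (exp (z k) - 1)) = Phi (sg m) k * norm (exp (z k) - 1)"
        using Phi_pos[of "sg m" k] by (simp add: norm_mult)
      moreover have "Phi (sg m) k * norm (exp (z k) - 1) \<le> norm (exp (z k) - 1)"
        using Phi_pos[of "sg m" k] Phi_le1[of "sg m" k] by (intro mult_left_le_one_le) auto
      ultimately show "norm (complex_of_real (Phi (sg m) k) * exp (\<i> * complex_of_real (k \<bullet> x)) * (exp (z k) - 1)) \<le> t * exp t * norm (fourier_hat a k 0)"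
        by linarith
    qed
  qed
  have bnd: "norm (\<integral>k. complex_of_real (Phi (sg m) k) * exp (\<i> * complex_of_real (k \<bullet> x)) * (exp (z k) - 1) \<partial>lborel) * exp (\<tau> \<bullet> x)
      \<le> C * ((2*pi)^DIM('a) * exp ((norm \<tau>)^2 / 2)) * (t * exp (t * M))" for m
  proof -
    have "norm (\<integral>k. complex_of_real (Phi (sg m) k) * exp (\<i> * complex_of_real (k \<bullet> x)) * (exp (z k) - 1) \<partial>lborel) * exp (\<tau> \<bullet> x)
      \<le> C * ((2*pi)^DIM('a) * exp ((sg m)^2 * (norm \<tau>)^2 / 2)) * (t * exp (t * M))"
      unfolding z_def M_def by (rule I_sigma_bound[OF sg0 t aw int_aw])
    also have "\<dots> \<le> C * ((2*pi)^DIM('a) * exp ((norm \<tau>)^2 / 2)) * (t * exp (t * M))"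
    proof -
      have "(sg m)^2 \<le> 1" using sg0[of m] sg1[of m] by (simp add: power_le_one)
      then have "(sg m)^2 * (norm \<tau>)^2 \<le> (norm \<tau>)^2" by (simp add: mult_left_le_one_le)
      then have "exp ((sg m)^2 * (norm \<tau>)^2 / 2) \<le> exp ((norm \<tau>)^2 / 2)" by simp
      then show ?thesis using C0 t by (intro mult_right_mono mult_left_mono) auto
    qed
    finally show ?thesis .
  qed
  have "(\<lambda>m. norm (\<integral>k. complex_of_real (Phi (sg m) k) * exp (\<i> * complex_of_real (k \<bullet> x)) * (exp (z k) - 1) \<partial>lborel) * exp (\<tau> \<bullet> x))
      \<longlonglongrightarrow> norm (\<integral>k. exp (\<i> * complex_of_real (k \<bullet> x)) * (exp (z k) - 1) \<partial>lborel) * exp (\<tau> \<bullet> x)"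
    by (intro tendsto_mult_right tendsto_norm lim)
  then have "norm (\<integral>k. exp (\<i> * complex_of_real (k \<bullet> x)) * (exp (z k) - 1) \<partial>lborel) * exp (\<tau> \<bullet> x) \<le> C * ((2*pi)^DIM('a) * exp ((norm \<tau>)^2 / 2)) * (t * exp (t * M))"
    by (rule LIMSEQ_le_const2) (use bnd in auto)
  then show ?thesis unfolding z_def M_def .
qed

end


lemma sinh_scale_nonneg:
  fixes l s :: real
  assumes l: "0 \<le> l" "l \<le> 1" and s: "0 \<le> s"
  shows "sinh (l * s) \<le> l * sinh s"
proof -
  have "(\<lambda>u. l * sinh u - sinh (l * u)) 0 \<le> (\<lambda>u. l * sinh u - sinh (l * u)) s"
  proof (rule DERIV_nonneg_imp_nondecreasing[OF s])
    fix u :: real assume u: "0 \<le> u" "u \<le> s"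
    have "((\<lambda>u. l * sinh u - sinh (l * u)) has_real_derivative (l * cosh u - cosh (l * u) * l)) (at u)"
      by (auto intro!: derivative_eq_intros)
    moreover have "cosh (l * u) \<le> cosh u"
      using l u by (subst cosh_real_nonneg_le_iff) (auto simp: mult_left_le_one_le)
    then have "0 \<le> l * cosh u - cosh (l * u) * l"
      using l by (simp add: algebra_simps mult_left_mono)
    ultimately show "\<exists>y. ((\<lambda>u. l * sinh u - sinh (l * u)) has_real_derivative y) (at u) \<and> 0 \<le> y"
      by blast
  qed
  then show ?thesis by simp
qed

lemma cosh_scale:
  fixes l s :: real
  assumes l: "0 \<le> l" "l \<le> 1"
  shows "cosh (l * s) - 1 \<le> l^2 * (cosh s - 1)"
proof -
  have main: "cosh (l * s) - 1 \<le> l^2 * (cosh s - 1)" if s: "0 \<le> s" for s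
  proof -
    have "(\<lambda>u. l^2 * (cosh u - 1) - (cosh (l * u) - 1)) 0 \<le> (\<lambda>u. l^2 * (cosh u - 1) - (cosh (l * u) - 1)) s"
    proof (rule DERIV_nonneg_imp_nondecreasing[OF s])
      fix u :: real assume u: "0 \<le> u" "u \<le> s"
      have "((\<lambda>u. l^2 * (cosh u - 1) - (cosh (l * u) - 1)) has_real_derivative (l^2 * sinh u - sinh (l * u) * l)) (at u)"
        by (auto intro!: derivative_eq_intros)
      moreover have "sinh (l * u) \<le> l * sinh u" by (rule sinh_scale_nonneg[OF l u(1)])
      then have "0 \<le> l^2 * sinh u - sinh (l * u) * l"
        using l by (simp add: power2_eq_square algebra_simps mult_left_mono)
      ultimately show "\<exists>y. ((\<lambda>u. l^2 * (cosh u - 1) - (cosh (l * u) - 1)) has_real_derivative y) (at u) \<and> 0 \<le> y"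
        by blast
    qed
    then show ?thesis by simp
  qed
  show ?thesis
  proof (cases "0 \<le> s")
    case True then show ?thesis by (rule main)
  next
    case False
    then have "cosh (l * (- s)) - 1 \<le> l^2 * (cosh (- s) - 1)" by (intro main) auto
    then show ?thesis by simp
  qed
qed

lemma cosh_real_eq: "cosh (x::real) = (exp x + exp (- x)) / 2"
  by (simp add: cosh_def)

lemma aw_le:
  fixes a :: "'a::euclidean_space \<Rightarrow> real"
  assumes a_nn: "\<And>y. 0 \<le> a y" and dec: "\<And>y. a y \<le> C * exp (- \<delta> * norm y)"
    and tn: "norm \<tau> \<le> e"
  shows "a y * exp (\<tau> \<bullet> y) \<le> C * exp (- (\<delta> - e) * norm y)"
proof -
  have "\<tau> \<bullet> y \<le> e * norm y"
    using norm_cauchy_schwarz[of \<tau> y] tn by (smt (verit) mult_right_mono norm_ge_zero)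
  then have "exp (\<tau> \<bullet> y) \<le> exp (e * norm y)" by simp
  then have "a y * exp (\<tau> \<bullet> y) \<le> C * exp (- \<delta> * norm y) * exp (e * norm y)"
    using a_nn[of y] dec[of y] by (intro mult_mono) auto
  also have "\<dots> = C * exp (- (\<delta> - e) * norm y)"
    by (simp add: mult.assoc algebra_simps flip: exp_add)
  finally show ?thesis .
qed

lemma aw_int:
  fixes a :: "'a::euclidean_space \<Rightarrow> real"
  assumes a_nn: "\<And>y. 0 \<le> a y" and am: "a \<in> borel_measurable borel" and dec: "\<And>y. a y \<le> C * exp (- \<delta> * norm y)"
    and tn: "norm \<tau> \<le> e" and e: "e < \<delta>"
  shows "integrable lborel (\<lambda>y. a y * exp (\<tau> \<bullet> y))"
proof -
  have "integrable lborel (\<lambda>y::'a. C * exp (- (\<delta> - e) * norm y))"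
    using e by (intro integrable_mult_right exp_norm_integrable) simp
  then show ?thesis
  proof (rule Bochner_Integration.integrable_bound)
    show "(\<lambda>y. a y * exp (\<tau> \<bullet> y)) \<in> borel_measurable lborel" using am by measurable
    show "AE y in lborel. norm (a y * exp (\<tau> \<bullet> y)) \<le> norm (C * exp (- (\<delta> - e) * norm y))"
    proof (rule AE_I2)
      fix y :: 'a
      have "a y * exp (\<tau> \<bullet> y) \<le> C * exp (- (\<delta> - e) * norm y)" by (rule aw_le[OF a_nn dec tn])
      moreover have "0 \<le> a y * exp (\<tau> \<bullet> y)" using a_nn[of y] by simp
      ultimately show "norm (a y * exp (\<tau> \<bullet> y)) \<le> norm (C * exp (- (\<delta> - e) * norm y))" by simp
    qed
  qed
qed

lemma M_bound:
  fixes a :: "'a::euclidean_space \<Rightarrow> real"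
  assumes a_nn: "\<And>y. 0 \<le> a y" and am: "a \<in> borel_measurable borel" and a_int: "integrable lborel a"
    and a_one: "(LINT y|lborel. a y) = 1" and symm: "\<And>y. a y = a (- y)"
    and dec: "\<And>y. a y \<le> C * exp (- \<delta> * norm y)"
    and e0: "0 < e0" "e0 < \<delta>" and tn: "norm \<tau> \<le> e0"
  shows "(\<integral>y. a y * exp (\<tau> \<bullet> y) \<partial>lborel) \<le> 1 + (C * (\<integral>y. exp (- (\<delta> - e0) * norm (y::'a)) \<partial>lborel) / e0^2) * (norm \<tau>)^2"
proof (cases "\<tau> = 0")
  case True then show ?thesis using a_one by simp
next
  case False
  define l where "l = norm \<tau> / e0"
  define \<sigma> where "\<sigma> = (1 / l) *\<^sub>R \<tau>"
  have l0: "0 < l" using False e0 by (simp add: l_def)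
  have l1: "l \<le> 1" using tn e0 by (simp add: l_def)
  have ns: "norm \<sigma> = e0" using l0 e0 False by (simp add: \<sigma>_def l_def)
  have ts: "\<tau> = l *\<^sub>R \<sigma>" using l0 by (simp add: \<sigma>_def)
  define K0 where "K0 = C * (\<integral>y. exp (- (\<delta> - e0) * norm (y::'a)) \<partial>lborel)"
  have int1: "integrable lborel (\<lambda>y. a y * exp (\<tau> \<bullet> y))" by (rule aw_int[OF a_nn am dec tn e0(2)])
  have int2: "integrable lborel (\<lambda>y. a y * exp ((- \<tau>) \<bullet> y))" by (rule aw_int[OF a_nn am dec _ e0(2)]) (use tn in simp)
  have int3: "integrable lborel (\<lambda>y. a y * exp (\<sigma> \<bullet> y))" by (rule aw_int[OF a_nn am dec _ e0(2)]) (use ns in simp)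
  have int4: "integrable lborel (\<lambda>y. a y * exp ((- \<sigma>) \<bullet> y))" by (rule aw_int[OF a_nn am dec _ e0(2)]) (use ns in simp)
  have reflM: "(\<integral>y. a y * exp ((- \<tau>) \<bullet> y) \<partial>lborel) = (\<integral>y. a y * exp (\<tau> \<bullet> y) \<partial>lborel)"
  proof -
    have "(\<integral>y. a y * exp (\<tau> \<bullet> y) \<partial>lborel) = (\<integral>y. a (0 - y) * exp (\<tau> \<bullet> (0 - y)) \<partial>lborel)"
      by (rule integral_eucl_reflect[where f="\<lambda>y. a y * exp (\<tau> \<bullet> y)", symmetric])
    also have "\<dots> = (\<integral>y. a y * exp ((- \<tau>) \<bullet> y) \<partial>lborel)"
      by (intro Bochner_Integration.integral_cong refl) (simp add: symm[symmetric])
    finally show ?thesis ..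
  qed
  have Mcosh: "(\<integral>y. a y * exp (\<tau> \<bullet> y) \<partial>lborel) = (\<integral>y. a y * cosh (\<tau> \<bullet> y) \<partial>lborel)"
  proof -
    have "(\<integral>y. a y * cosh (\<tau> \<bullet> y) \<partial>lborel) = (\<integral>y. (a y * exp (\<tau> \<bullet> y) + a y * exp ((- \<tau>) \<bullet> y)) / 2 \<partial>lborel)"
      by (intro Bochner_Integration.integral_cong refl) (unfold cosh_real_eq, simp add: algebra_simps)
    also have "\<dots> = ((\<integral>y. a y * exp (\<tau> \<bullet> y) \<partial>lborel) + (\<integral>y. a y * exp ((- \<tau>) \<bullet> y) \<partial>lborel)) / 2"
      using int1 int2 by simp
    finally show ?thesis using reflM by simp
  qed
  have intc: "integrable lborel (\<lambda>y. a y * cosh (\<sigma> \<bullet> y))"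
  proof -
    have "integrable lborel (\<lambda>y. (a y * exp (\<sigma> \<bullet> y) + a y * exp ((- \<sigma>) \<bullet> y)) / 2)" using int3 int4 by simp
    moreover have "(\<lambda>y. (a y * exp (\<sigma> \<bullet> y) + a y * exp ((- \<sigma>) \<bullet> y)) / 2) = (\<lambda>y. a y * cosh (\<sigma> \<bullet> y))"
      unfolding cosh_real_eq by (simp add: algebra_simps fun_eq_iff)
    ultimately show ?thesis by simp
  qed
  have intct: "integrable lborel (\<lambda>y. a y * cosh (\<tau> \<bullet> y))"
  proof -
    have "integrable lborel (\<lambda>y. (a y * exp (\<tau> \<bullet> y) + a y * exp ((- \<tau>) \<bullet> y)) / 2)" using int1 int2 by simp
    moreover have "(\<lambda>y. (a y * exp (\<tau> \<bullet> y) + a y * exp ((- \<tau>) \<bullet> y)) / 2) = (\<lambda>y. a y * cosh (\<tau> \<bullet> y))"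
      unfolding cosh_real_eq by (simp add: algebra_simps fun_eq_iff)
    ultimately show ?thesis by simp
  qed
  have "(\<integral>y. a y * cosh (\<tau> \<bullet> y) \<partial>lborel) - 1 = (\<integral>y. a y * (cosh (\<tau> \<bullet> y) - 1) \<partial>lborel)"
    using intct a_int a_one by (simp add: algebra_simps)
  also have "\<dots> \<le> (\<integral>y. l^2 * (a y * cosh (\<sigma> \<bullet> y)) \<partial>lborel)"
  proof (rule Bochner_Integration.integral_mono)
    show "integrable lborel (\<lambda>y. a y * (cosh (\<tau> \<bullet> y) - 1))" using intct a_int by (simp add: algebra_simps)
    show "integrable lborel (\<lambda>y. l^2 * (a y * cosh (\<sigma> \<bullet> y)))" using intc by simp
    fix y :: 'a
    have "cosh (l * (\<sigma> \<bullet> y)) - 1 \<le> l^2 * (cosh (\<sigma> \<bullet> y) - 1)" by (rule cosh_scale) (use l0 l1 in auto)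
    also have "\<dots> \<le> l^2 * cosh (\<sigma> \<bullet> y)" by (simp add: algebra_simps)
    finally have "cosh (\<tau> \<bullet> y) - 1 \<le> l^2 * cosh (\<sigma> \<bullet> y)" unfolding ts by simp
    then show "a y * (cosh (\<tau> \<bullet> y) - 1) \<le> l^2 * (a y * cosh (\<sigma> \<bullet> y))"
      using a_nn[of y] by (metis mult.left_commute mult_left_mono)
  qed
  also have "\<dots> = l^2 * (\<integral>y. a y * cosh (\<sigma> \<bullet> y) \<partial>lborel)" by simp
  also have "\<dots> \<le> l^2 * K0"
  proof (rule mult_left_mono)
    show "(\<integral>y. a y * cosh (\<sigma> \<bullet> y) \<partial>lborel) \<le> K0"
      unfolding K0_def integral_mult_right_zero[symmetric]
    proof (rule Bochner_Integration.integral_mono[OF intc])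
      show "integrable lborel (\<lambda>y::'a. C * exp (- (\<delta> - e0) * norm y))"
        using e0 by (intro integrable_mult_right exp_norm_integrable) simp
      fix y :: 'a
      have "a y * cosh (\<sigma> \<bullet> y) \<le> a y * exp \<bar>\<sigma> \<bullet> y\<bar>"
        using a_nn[of y] by (intro mult_left_mono) (unfold cosh_real_eq, auto simp: abs_if)
      also have "\<dots> \<le> C * exp (- (\<delta> - e0) * norm y)"
      proof (cases "0 \<le> \<sigma> \<bullet> y")
        case True then show ?thesis using aw_le[OF a_nn dec, of \<sigma> e0 y] ns by simp
      next
        case False then show ?thesis using aw_le[OF a_nn dec, of "- \<sigma>" e0 y] ns by simp
      qed
      finally show "a y * cosh (\<sigma> \<bullet> y) \<le> C * exp (- (\<delta> - e0) * norm y)" .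
    qed
  qed simp
  also have "\<dots> = (K0 / e0^2) * (norm \<tau>)^2" using e0 by (simp add: l_def power_divide)
  finally show ?thesis unfolding Mcosh K0_def by simp
qed


theorem mainTheorem10:
  fixes a :: "'a::euclidean_space \<Rightarrow> real"
    and C \<delta> \<epsilon>0 C' :: real
  assumes nonneg: "\<And>y. a y \<ge> 0"
    and symm: "\<And>y. a y = a (- y)"
    and a_int: "integrable lborel a"
    and a_one: "(LINT y|lborel. a y) = 1"
    and hat_L1: "integrable lborel (\<lambda>k. fourier_hat a k 0)"
    and \<delta>_pos: "\<delta> > 0"
    and decay: "\<And>y. \<bar>a y\<bar> < C * exp (- \<delta> * norm y)"
    and \<epsilon>0: "0 < \<epsilon>0" "\<epsilon>0 < \<delta>"
    and strip: "\<And>\<tau>. norm \<tau> \<le> \<epsilon>0 \<Longrightarrow>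
                 integrable lborel (\<lambda>k. fourier_hat a k \<tau>) \<and>
                 (LINT k|lborel. norm (fourier_hat a k \<tau>)) \<le> C'"
  shows "\<exists>\<alpha> C''. \<exists>\<epsilon>1>0. \<forall>\<epsilon>. 0 \<le> \<epsilon> \<and> \<epsilon> < \<epsilon>1 \<longrightarrow>
           (\<forall>t>0. \<forall>x. x \<noteq> 0 \<longrightarrow>
              trans_density a t x \<le> C'' * t * exp (\<alpha> * \<epsilon>^2 * t - \<epsilon> * norm x))"
proof -
  have am: "a \<in> borel_measurable borel" using borel_measurable_integrable[OF a_int] by simp
  have dec: "a y \<le> C * exp (- \<delta> * norm y)" for y using decay[of y] by simp
  have C0: "0 < C" using decay[of 0] by simp
  define K0 where "K0 = C * (\<integral>y. exp (- (\<delta> - \<epsilon>0) * norm (y::'a)) \<partial>lborel)"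
  define \<alpha> where "\<alpha> = K0 / \<epsilon>0^2"
  have main: "\<forall>\<epsilon>. 0 \<le> \<epsilon> \<and> \<epsilon> < min 1 \<epsilon>0 \<longrightarrow>
           (\<forall>t>0. \<forall>x. x \<noteq> 0 \<longrightarrow>
              trans_density a t x \<le> (C * exp 1) * t * exp (\<alpha> * \<epsilon>^2 * t - \<epsilon> * norm x))"
  proof (intro allI impI)
    fix \<epsilon> t :: real and x :: 'a
    assume \<epsilon>: "0 \<le> \<epsilon> \<and> \<epsilon> < min 1 \<epsilon>0" and t: "0 < t" and x: "x \<noteq> 0"
    define \<tau> where "\<tau> = (\<epsilon> / norm x) *\<^sub>R x"
    have n\<tau>: "norm \<tau> = \<epsilon>" using x \<epsilon> by (simp add: \<tau>_def)
    have \<tau>x: "\<tau> \<bullet> x = \<epsilon> * norm x"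
      using x by (simp add: \<tau>_def power2_norm_eq_inner[symmetric] power2_eq_square)
    have tn: "norm \<tau> \<le> \<epsilon>0" using n\<tau> \<epsilon> by simp
    have aw: "a y * exp (\<tau> \<bullet> y) \<le> C" for y
    proof -
      have "a y * exp (\<tau> \<bullet> y) \<le> C * exp (- (\<delta> - \<epsilon>0) * norm y)" by (rule aw_le[OF nonneg dec tn])
      also have "\<dots> \<le> C * 1" using C0 \<epsilon>0 by (intro mult_left_mono) (auto simp: mult_nonpos_nonneg)
      finally show ?thesis by simp
    qed
    have int_aw: "integrable lborel (\<lambda>y. a y * exp (\<tau> \<bullet> y))" by (rule aw_int[OF nonneg am dec tn \<epsilon>0(2)])
    define M where "M = (\<integral>y. a y * exp (\<tau> \<bullet> y) \<partial>lborel)"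
    have Mb: "M \<le> 1 + \<alpha> * \<epsilon>^2"
      using M_bound[OF nonneg am a_int a_one symm dec \<epsilon>0 tn] unfolding M_def \<alpha>_def K0_def n\<tau> by simp
    define I where "I = (LINT k|lborel. exp (\<i> * complex_of_real (k \<bullet> x)) * (exp (complex_of_real t * fourier_hat a k 0) - 1))"
    have Ib: "norm I * exp (\<tau> \<bullet> x) \<le> C * ((2*pi)^DIM('a) * exp ((norm \<tau>)^2 / 2)) * (t * exp (t * M))"
      unfolding I_def M_def by (rule I_bound[OF nonneg a_int a_one hat_L1 t aw int_aw])
    have Ib2: "norm I \<le> C * ((2*pi)^DIM('a) * exp (\<epsilon>^2 / 2)) * (t * exp (t * M)) * exp (- (\<epsilon> * norm x))"
    proof -
      have "norm I = norm I * exp (\<tau> \<bullet> x) * exp (- (\<tau> \<bullet> x))" by (simp add: exp_minus field_simps)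
      also have "\<dots> \<le> C * ((2*pi)^DIM('a) * exp ((norm \<tau>)^2 / 2)) * (t * exp (t * M)) * exp (- (\<tau> \<bullet> x))"
        using Ib by (intro mult_right_mono) auto
      finally show ?thesis unfolding \<tau>x n\<tau> .
    qed
    have "trans_density a t x = Re (complex_of_real (exp (- t) / (2 * pi) ^ DIM('a)) * I)"
      unfolding trans_density_def I_def ..
    also have "\<dots> \<le> norm (complex_of_real (exp (- t) / (2 * pi) ^ DIM('a)) * I)"
      by (rule complex_Re_le_cmod)
    also have "\<dots> = exp (- t) / (2 * pi) ^ DIM('a) * norm I"
      unfolding norm_mult norm_of_real by simp
    also have "\<dots> \<le> exp (- t) / (2 * pi) ^ DIM('a) * (C * ((2*pi)^DIM('a) * exp (\<epsilon>^2 / 2)) * (t * exp (t * M)) * exp (- (\<epsilon> * norm x)))"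
      using Ib2 by (intro mult_left_mono) auto
    also have "\<dots> = C * exp (\<epsilon>^2 / 2) * t * exp (t * (M - 1) - \<epsilon> * norm x)"
      by (simp add: exp_diff exp_minus exp_add field_simps)
    also have "\<dots> \<le> C * exp 1 * t * exp (\<alpha> * \<epsilon>^2 * t - \<epsilon> * norm x)"
    proof -
      have "\<epsilon>^2 \<le> 1" using \<epsilon> by (simp add: power_le_one)
      then have e1: "exp (\<epsilon>^2 / 2) \<le> exp 1" by simp
      have "t * (M - 1) \<le> t * (\<alpha> * \<epsilon>^2)" using Mb t by (intro mult_left_mono) auto
      then have e2: "exp (t * (M - 1) - \<epsilon> * norm x) \<le> exp (\<alpha> * \<epsilon>^2 * t - \<epsilon> * norm x)"
        by (simp add: algebra_simps)
      show ?thesis using C0 t e1 e2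
        by (intro mult_mono) (auto intro!: mult_nonneg_nonneg)
    qed
    finally show "trans_density a t x \<le> C * exp 1 * t * exp (\<alpha> * \<epsilon>^2 * t - \<epsilon> * norm x)" .
  qed
  have "0 < min 1 \<epsilon>0" using \<epsilon>0 by simp
  with main show ?thesis by blast
qed

end
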